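(* Let $F$ be defined by the formula $F(x)=\beta_{i_1,1}+\sum_{k=2}^{\infty}\Big[\tilde\beta_{i_k,k}\prod_{j=1}^{k-1}\tilde p_{i_j,j}\Big]$ for $x=\Delta^{-\tilde Q}_{i_1i_2\dots i_n\dots}\in[0,1]$. Then $F$ is correctly defined at every point of $[0,1]$: for every nega-$\tilde Q$-representation of $x$ the series converges, and for every nega-$\tilde Q$-rational $x$ its two different nega-$\tilde Q$-representations give the same value of the series.
   Context: Let $(m_n)_{n\ge1}$ be a sequence of finite nonnegative integers and $\tilde Q=\|q_{i,n}\|$ ($n\in\mathbb N$, $i\in\{0,1,\dots,m_n\}$) a matrix with $q_{i,n}>0$, $\sum_{i=0}^{m_n}q_{i,n}=1$ for all $n$, and $\prod_{n=1}^\infty q_{i_n,n}=0$ for every sequence $(i_n)$ with $i_n\in\{0,\dots,m_n\}$. Put $a_{0,n}=0$, $a_{i,n}=\sum_{l=0}^{i-1}q_{l,n}$ for $i\ge1$, and for digit sequences $\Delta^{\tilde Q}_{j_1j_2\dots}=a_{j_1,1}+\sum_{n\ge2}a_{j_n,n}\prod_{l=1}^{n-1}q_{j_l,l}$. For odd $n$ set $\tilde q_{i,n}=q_{i,n}$, $\tilde a_{i,n}=a_{i,n}$; for even $n$ set $\tilde q_{i,n}=q_{m_n-i,n}$, $\tilde a_{i,n}=a_{m_n-i,n}$. The nega-$\tilde Q$-representation $x=\Delta^{-\tilde Q}_{i_1i_2\dots}$ ($i_n\in\{0,\dots,m_n\}$) means $x=\Delta^{\tilde Q}_{i_1[m_2-i_2]i_3[m_4-i_4]\dots}=a_{i_1,1}+\sum_{n\ge2}\tilde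 a_{i_n,n}\prod_{j=1}^{n-1}\tilde q_{i_j,j}$. Every $x\in[0,1]$ has such a representation; the numbers $\Delta^{-\tilde Q}_{i_1\dots i_{n-1}i_nm_{n+1}0m_{n+3}0m_{n+5}\dots}=\Delta^{-\tilde Q}_{i_1\dots i_{n-1}[i_n-1]0m_{n+2}0m_{n+4}\dots}$ ($i_n\neq0$) have exactly two representations and are called nega-$\tilde Q$-rational; the others have one and are called nega-$\tilde Q$-irrational. Let $P=\|p_{i,n}\|$ be a matrix of the same shape with $p_{i,n}\in(-1,1)$, $\sum_{i=0}^{m_n}p_{i,n}=1$ for all $n$, $\prod_{n=1}^\infty|p_{i_n,n}|=0$ for every digit sequence $(i_n)$, and $0<\sum_{i=0}^{c-1}p_{i,n}<1$ for all $n$ and $c\in\{1,\dots,m_n\}$. Put $\beta_{0,n}=0$, $\beta_{c,n}=\sum_{i=0}^{c-1}p_{i,n}$ for $c\ge1$; for odd $n$ let $\tilde p_{i,n}=p_{i,n}$, $\tilde\beta_{i,n}=\beta_{i,n}$, for even $n$ let $\tilde p_{i,n}=p_{m_n-i,n}$, $\tilde\beta_{i,n}=\beta_{m_n-i,n}$. *)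

theory Defs
  imports Complex_Main
begin

text \<open>Matrices are functions of (digit i, column n); columns are indexed from n = 1.\<close>

definition valid_digits :: "(nat \<Rightarrow> nat) \<Rightarrow> (nat \<Rightarrow> nat) \<Rightarrow> bool" where
  "valid_digits m d \<longleftrightarrow> (\<forall>n\<ge>1. d n \<le> m n)"

text \<open>Cumulative sums: a_{i,n} = sum_{l<i} q_{l,n} (so a_{0,n} = 0); likewise beta.\<close>
definition cum :: "(nat \<Rightarrow> nat \<Rightarrow> real) \<Rightarrow> nat \<Rightarrow> nat \<Rightarrow> real" where
  "cum q i n = (\<Sum>l<i. q l n)"

definition tld :: "(nat \<Rightarrow> nat) \<Rightarrow> (nat \<Rightarrow> nat \<Rightarrow> real) \<Rightarrow> nat \<Rightarrow> nat \<Rightarrow> real" where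
  "tld m f i n = (if odd n then f i n else f (m n - i) n)"

definition nega_term :: "(nat \<Rightarrow> nat) \<Rightarrow> (nat \<Rightarrow> nat \<Rightarrow> real) \<Rightarrow> (nat \<Rightarrow> nat) \<Rightarrow> nat \<Rightarrow> real" where
  "nega_term m q d n = tld m (cum q) (d n) n * (\<Prod>j\<in>{1..<n}. tld m q (d j) j)"

definition nega_val :: "(nat \<Rightarrow> nat) \<Rightarrow> (nat \<Rightarrow> nat \<Rightarrow> real) \<Rightarrow> (nat \<Rightarrow> nat) \<Rightarrow> real" where
  "nega_val m q d = (\<Sum>k. nega_term m q d (Suc k))"

end

theory Submission
  imports Defs
begin

definition prd :: "(nat \<Rightarrow> nat \<Rightarrow> real) \<Rightarrow> (nat \<Rightarrow> nat) \<Rightarrow> nat \<Rightarrow> real" where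
  "prd r e n = (\<Prod>j\<in>{1..<n}. r (e j) j)"

definition trm :: "(nat \<Rightarrow> nat \<Rightarrow> real) \<Rightarrow> (nat \<Rightarrow> nat) \<Rightarrow> nat \<Rightarrow> real" where
  "trm r e n = cum r (e n) n * prd r e n"

lemma prd_Suc: "1 \<le> n \<Longrightarrow> prd r e (Suc n) = prd r e n * r (e n) n"
  unfolding prd_def by (simp add: prod.atLeastLessThan_Suc)

lemma cum_Suc: "cum r (Suc i) n = cum r i n + r i n"
  unfolding cum_def by simp

lemma cum_0[simp]: "cum r 0 n = 0"
  unfolding cum_def by simp

lemma lemA:
  assumes bnd: "\<And>n. n\<ge>1 \<Longrightarrow> 0 \<le> cum r (e n) n \<and> cum r (e n) n \<le> 1 \<and>
      0 \<le> cum r (e n) n + r (e n) n \<and> cum r (e n) n + r (e n) n \<le> 1"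
  shows "\<exists>t. 0 \<le> t \<and> t \<le> 1 \<and> (\<Sum>i\<in>{b..<b+k}. trm r e (Suc i)) = prd r e (Suc b) * t"
proof (induction k arbitrary: b)
  case 0
  then show ?case by (intro exI[of _ 0]) simp
next
  case (Suc k)
  obtain t' where t': "0 \<le> t'" "t' \<le> 1"
    "(\<Sum>i\<in>{Suc b..<Suc b+k}. trm r e (Suc i)) = prd r e (Suc (Suc b)) * t'"
    using Suc.IH[of "Suc b"] by blast
  define c where "c = cum r (e (Suc b)) (Suc b)"
  define rr where "rr = r (e (Suc b)) (Suc b)"
  have b: "0 \<le> c" "c \<le> 1" "0 \<le> c + rr" "c + rr \<le> 1" using bnd[of "Suc b"] by (auto simp: c_def rr_def)
  have "(\<Sum>i\<in>{b..<b+Suc k}. trm r e (Suc i)) = trm r e (Suc b) + (\<Sum>i\<in>{Suc b..<Suc b+k}. trm r e (Suc i))"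
    by (simp add: sum.atLeast_Suc_lessThan)
  also have "\<dots> = prd r e (Suc b) * (c + rr * t')"
    using t'(3) by (simp add: trm_def prd_Suc c_def rr_def algebra_simps)
  finally have eq: "(\<Sum>i\<in>{b..<b+Suc k}. trm r e (Suc i)) = prd r e (Suc b) * (c + rr * t')" .
  have cv: "c + rr * t' = (1 - t') * c + t' * (c + rr)" by (simp add: algebra_simps)
  have "0 \<le> (1 - t') * c" "0 \<le> t' * (c + rr)" using b t' by auto
  moreover have "(1 - t') * c \<le> (1 - t')" "t' * (c + rr) \<le> t'"
    using b t' by (auto simp: mult_left_le)
  ultimately have "0 \<le> c + rr * t'" "c + rr * t' \<le> 1" unfolding cv by linarith+
  with eq show ?case by blast
qed

lemma lemB:
  assumes bnd: "\<And>n. n\<ge>1 \<Longrightarrow> 0 \<le> cum r (e n) n \<and> cum r (e n) n \<le> 1 \<and>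
      0 \<le> cum r (e n) n + r (e n) n \<and> cum r (e n) n + r (e n) n \<le> 1"
    and lim: "(\<lambda>N. prd r e (Suc N)) \<longlonglongrightarrow> 0"
  shows "summable (\<lambda>k. trm r e (Suc k))"
  unfolding summable_Cauchy
proof (intro allI impI)
  fix eps :: real assume "eps > 0"
  then obtain M where M: "\<And>n. n \<ge> M \<Longrightarrow> \<bar>prd r e (Suc n)\<bar> < eps"
    using lim unfolding LIMSEQ_iff by auto
  show "\<exists>N. \<forall>m\<ge>N. \<forall>n. norm (\<Sum>k\<in>{m..<n}. trm r e (Suc k)) < eps"
  proof (intro exI allI impI)
    fix m n assume "m \<ge> M"
    show "norm (\<Sum>k\<in>{m..<n}. trm r e (Suc k)) < eps"
    proof (cases "n \<le> m")
      case True then show ?thesis using \<open>eps > 0\<close> by simp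
    next
      case False
      then obtain k where n: "n = m + k" by (metis le_add_diff_inverse less_or_eq_imp_le not_le)
      obtain t where t: "0 \<le> t" "t \<le> 1" "(\<Sum>i\<in>{m..<m+k}. trm r e (Suc i)) = prd r e (Suc m) * t"
        using lemA[OF bnd] by blast
      have "\<bar>prd r e (Suc m) * t\<bar> \<le> \<bar>prd r e (Suc m)\<bar>"
        using t by (simp add: abs_mult mult_left_le)
      then show ?thesis using M[OF \<open>m \<ge> M\<close>] n t(3) by simp
    qed
  qed
qed


definition Tl :: "(nat \<Rightarrow> nat \<Rightarrow> real) \<Rightarrow> (nat \<Rightarrow> nat) \<Rightarrow> nat \<Rightarrow> real" where
  "Tl r e b = (\<Sum>k. trm r e (Suc k)) - (\<Sum>k<b. trm r e (Suc k))"

lemma Tl_Suc: "Tl r e b = trm r e (Suc b) + Tl r e (Suc b)"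
  unfolding Tl_def by simp

context
  fixes m :: "nat \<Rightarrow> nat" and q :: "nat \<Rightarrow> nat \<Rightarrow> real"
  assumes q_pos: "\<And>n i. n \<ge> 1 \<Longrightarrow> i \<le> m n \<Longrightarrow> q i n > 0"
    and q_sum: "\<And>n. n \<ge> 1 \<Longrightarrow> (\<Sum>i\<le>m n. q i n) = 1"
begin

lemma cum_top: "n \<ge> 1 \<Longrightarrow> cum q (Suc (m n)) n = 1"
  unfolding cum_def using q_sum by (simp add: lessThan_Suc_atMost)

lemma cum_mono: assumes "n \<ge> 1" "i \<le> j" "j \<le> Suc (m n)" shows "cum q i n \<le> cum q j n"
  unfolding cum_def
proof (rule sum_mono2)
  show "\<And>b. b \<in> {..<j} - {..<i} \<Longrightarrow> 0 \<le> q b n" using assms q_pos[of n] by (auto intro: less_imp_le)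
qed (use assms in auto)

lemma cum_nonneg: "n \<ge> 1 \<Longrightarrow> i \<le> Suc (m n) \<Longrightarrow> 0 \<le> cum q i n"
  using cum_mono[of n 0 i] by simp

lemma cum_le1: "n \<ge> 1 \<Longrightarrow> i \<le> Suc (m n) \<Longrightarrow> cum q i n \<le> 1"
  using cum_mono[of n i "Suc (m n)"] cum_top by simp

lemma q_bnd: "n \<ge> 1 \<Longrightarrow> i \<le> m n \<Longrightarrow> 0 \<le> cum q i n \<and> cum q i n \<le> 1 \<and>
      0 \<le> cum q i n + q i n \<and> cum q i n + q i n \<le> 1"
  using cum_nonneg[of n i] cum_le1[of n i] cum_nonneg[of n "Suc i"] cum_le1[of n "Suc i"]
  by (simp add: cum_Suc)

lemma cum_strict: assumes "n \<ge> 1" "Suc i < j" "j \<le> Suc (m n)" shows "cum q (Suc i) n < cum q j n"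
proof -
  have "cum q (Suc i) n < cum q (Suc (Suc i)) n" using q_pos[of n "Suc i"] assms by (simp add: cum_Suc)
  also have "\<dots> \<le> cum q j n" using cum_mono assms by simp
  finally show ?thesis .
qed

lemma cum_pos: assumes "n \<ge> 1" "1 \<le> i" "i \<le> m n" shows "0 < cum q i n"
proof -
  have "0 < cum q 1 n" using q_pos[of n 0] assms by (simp add: cum_def)
  also have "\<dots> \<le> cum q i n" using cum_mono assms by simp
  finally show ?thesis .
qed

context
  fixes e :: "nat \<Rightarrow> nat"
  assumes ve: "\<And>n. n \<ge> 1 \<Longrightarrow> e n \<le> m n"
    and se: "summable (\<lambda>k. trm q e (Suc k))"
begin

lemma prd_pos: "prd q e n > 0"
  unfolding prd_def using q_pos ve by (intro prod_pos) auto

lemma trm_nonneg: "n \<ge> 1 \<Longrightarrow> 0 \<le> trm q e n"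
  unfolding trm_def using q_bnd[of n "e n"] ve[of n] prd_pos[of n] by simp

lemma Tl_nonneg: "0 \<le> Tl q e b"
proof -
  have "(\<Sum>k<b. trm q e (Suc k)) \<le> (\<Sum>k. trm q e (Suc k))"
    by (rule sum_le_suminf[OF se]) (auto intro: trm_nonneg)
  then show ?thesis unfolding Tl_def by simp
qed

lemma Tl_le: "Tl q e b \<le> prd q e (Suc b)"
proof -
  have "(\<Sum>k<N. trm q e (Suc k)) \<le> (\<Sum>k<b. trm q e (Suc k)) + prd q e (Suc b)" for N
  proof (cases "N \<le> b")
    case True
    have "(\<Sum>k<N. trm q e (Suc k)) \<le> (\<Sum>k<b. trm q e (Suc k))"
      by (rule sum_mono2) (use True in \<open>auto intro: trm_nonneg\<close>)
    then show ?thesis using prd_pos[of "Suc b"] by simp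
  next
    case False
    then obtain k where N: "N = b + k" by (metis le_add_diff_inverse nat_le_linear)
    obtain t where t: "0 \<le> t" "t \<le> 1" "(\<Sum>i\<in>{b..<b+k}. trm q e (Suc i)) = prd q e (Suc b) * t"
      using lemA[of q e b k] q_bnd ve by blast
    have "(\<Sum>k<N. trm q e (Suc k)) = (\<Sum>k<b. trm q e (Suc k)) + (\<Sum>i\<in>{b..<b+k}. trm q e (Suc i))"
      unfolding N lessThan_atLeast0 by (simp add: sum.atLeastLessThan_concat)
    moreover have "prd q e (Suc b) * t \<le> prd q e (Suc b)"
      using t prd_pos[of "Suc b"] by (simp add: mult_left_le)
    ultimately show ?thesis using t by simp
  qed
  then have "(\<Sum>k. trm q e (Suc k)) \<le> (\<Sum>k<b. trm q e (Suc k)) + prd q e (Suc b)"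
    by (intro suminf_le_const[OF se])
  then show ?thesis unfolding Tl_def by simp
qed

lemma one_step: assumes "Tl q e b = prd q e (Suc b)"
  shows "e (Suc b) = m (Suc b) \<and> Tl q e (Suc b) = prd q e (Suc (Suc b))"
proof -
  define n where "n = Suc b"
  define c where "c = e n"
  define P where "P = prd q e n"
  have n1: "n \<ge> 1" by (simp add: n_def)
  have P: "P > 0" using prd_pos by (simp add: P_def)
  have cm: "c \<le> m n" using ve n1 by (simp add: c_def)
  have R: "Tl q e b = cum q c n * P + Tl q e (Suc b)"
    using Tl_Suc[of q e b] by (simp add: trm_def c_def P_def n_def)
  have R2: "Tl q e (Suc b) \<le> P * q c n"
    using Tl_le[of "Suc b"] prd_Suc[of n q e] by (simp add: n_def P_def c_def)
  have c: "c = m n"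
  proof (rule ccontr)
    assume "c \<noteq> m n"
    then have "Suc c \<le> m n" using cm by simp
    then have "cum q (Suc c) n \<le> cum q (m n) n" using cum_mono n1 by simp
    also have "\<dots> = 1 - q (m n) n" using cum_top[OF n1] by (simp add: cum_Suc)
    finally have "cum q c n + q c n < 1" using q_pos[OF n1, of "m n"] by (simp add: cum_Suc)
    then have "(cum q c n + q c n) * P < P" using P by simp
    then have "Tl q e b < P" using R R2 by (simp add: algebra_simps)
    then show False using assms by (simp add: P_def n_def)
  qed
  have cc: "cum q c n = 1 - q c n" using cum_top[OF n1] c by (simp add: cum_Suc)
  have A: "Tl q e b = P" using assms by (simp add: P_def n_def)
  have "Tl q e (Suc b) = P - cum q c n * P" using R A by linarith
  then have "Tl q e (Suc b) = P * q c n" unfolding cc by (simp add: algebra_simps)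
  then show ?thesis using c prd_Suc[of n q e] by (simp add: c_def n_def P_def)
qed

lemma one_all: "Tl q e b = prd q e (Suc b) \<Longrightarrow> e (Suc b + j) = m (Suc b + j)"
proof (induction j arbitrary: b)
  case 0 then show ?case using one_step by simp
next
  case (Suc j)
  have "Tl q e (Suc b) = prd q e (Suc (Suc b))" using one_step Suc.prems by blast
  from Suc.IH[OF this] show ?case by simp
qed

lemma zero_step: assumes "Tl q e b = 0"
  shows "e (Suc b) = 0 \<and> Tl q e (Suc b) = 0"
proof -
  define n where "n = Suc b"
  have n1: "n \<ge> 1" by (simp add: n_def)
  have R: "Tl q e b = cum q (e n) n * prd q e n + Tl q e (Suc b)"
    using Tl_Suc[of q e b] by (simp add: trm_def n_def)
  have a: "0 \<le> cum q (e n) n * prd q e n" using q_bnd[OF n1 ve[OF n1]] prd_pos[of n] by simp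
  have b: "0 \<le> Tl q e (Suc b)" by (rule Tl_nonneg)
  have "cum q (e n) n * prd q e n = 0" "Tl q e (Suc b) = 0" using R a b assms by linarith+
  then have "cum q (e n) n = 0" using prd_pos[of n] by simp
  then have "e n = 0" using cum_pos[OF n1, of "e n"] ve[OF n1] by (cases "e n") auto
  then show ?thesis using \<open>Tl q e (Suc b) = 0\<close> by (simp add: n_def)
qed

lemma zero_all: "Tl q e b = 0 \<Longrightarrow> e (Suc b + j) = 0"
proof (induction j arbitrary: b)
  case 0 then show ?case using zero_step by simp
next
  case (Suc j)
  have "Tl q e (Suc b) = 0" using zero_step Suc.prems by blast
  from Suc.IH[OF this] show ?case by simp
qed

end

end


lemma prd_agree:
  assumes "\<And>j. 1 \<le> j \<Longrightarrow> j < n \<Longrightarrow> e j = e' j"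
  shows "prd r e n = prd r e' n"
  unfolding prd_def using assms by (intro prod.cong) auto

lemma trm_agree:
  assumes "\<And>j. 1 \<le> j \<Longrightarrow> j \<le> n \<Longrightarrow> e j = e' j" "1 \<le> n"
  shows "trm r e n = trm r e' n" "prd r e n = prd r e' n"
proof -
  show P: "prd r e n = prd r e' n" unfolding prd_def using assms by (intro prod.cong) auto
  show "trm r e n = trm r e' n" unfolding trm_def P using assms by simp
qed

lemma prefix_agree:
  assumes "\<And>j. 1 \<le> j \<Longrightarrow> j \<le> b \<Longrightarrow> e j = e' j"
  shows "(\<Sum>k<b. trm r e (Suc k)) = (\<Sum>k<b. trm r e' (Suc k))"
  by (rule sum.cong) (use assms trm_agree(1)[of "Suc _" e e' r] in auto)

lemma p_eq:
  fixes p :: "nat \<Rightarrow> nat \<Rightarrow> real"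
  assumes p_sum: "\<And>n. n \<ge> 1 \<Longrightarrow> (\<Sum>i\<le>m n. p i n) = 1"
    and se: "summable (\<lambda>k. trm p e (Suc k))" and se': "summable (\<lambda>k. trm p e' (Suc k))"
    and agree: "\<And>j. 1 \<le> j \<Longrightarrow> j \<le> b \<Longrightarrow> e j = e' j"
    and nb: "e' (Suc b) = Suc (e (Suc b))"
    and em: "\<And>j. e (Suc (Suc b) + j) = m (Suc (Suc b) + j)"
    and e0: "\<And>j. e' (Suc (Suc b) + j) = 0"
    and lim: "(\<lambda>N. prd p e (Suc N)) \<longlonglongrightarrow> 0"
  shows "(\<Sum>k. trm p e (Suc k)) = (\<Sum>k. trm p e' (Suc k))"
proof -
  define S where "S f N = (\<Sum>k<N. trm p f (Suc k))" for f N
  have key: "S e (t + Suc b) - S e' (t + Suc b) = - prd p e (Suc (t + Suc b))" for t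
  proof (induction t)
    case 0
    have pre: "S e b = S e' b" unfolding S_def by (rule prefix_agree) (use agree in auto)
    have pr: "prd p e (Suc b) = prd p e' (Suc b)" by (rule prd_agree) (use agree in auto)
    have "S e (Suc b) - S e' (Suc b) = trm p e (Suc b) - trm p e' (Suc b)"
      using pre unfolding S_def by simp
    also have "\<dots> = prd p e (Suc b) * (cum p (e (Suc b)) (Suc b) - cum p (Suc (e (Suc b))) (Suc b))"
      unfolding trm_def pr nb by (simp add: algebra_simps)
    also have "\<dots> = - prd p e (Suc (Suc b))"
      by (simp add: cum_Suc prd_Suc)
    finally show ?case by simp
  next
    case (Suc t)
    define k where "k = Suc (t + Suc b)"
    have k1: "k \<ge> 1" by (simp add: k_def)
    have ek: "e k = m k" using em[of t] by (simp add: k_def add.commute)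
    have ek': "e' k = 0" using e0[of t] by (simp add: k_def add.commute)
    have IH': "S e (t + Suc b) - S e' (t + Suc b) = - prd p e k" using Suc.IH by (simp add: k_def)
    have top: "cum p (m k) k + p (m k) k = 1"
      using p_sum[OF k1] by (simp add: cum_def lessThan_Suc_atMost[symmetric])
    have "S e (Suc t + Suc b) - S e' (Suc t + Suc b) = (S e (t + Suc b) - S e' (t + Suc b)) + trm p e k - trm p e' k"
      unfolding S_def k_def by simp
    also have "\<dots> = - prd p e k + cum p (m k) k * prd p e k"
      using IH' by (simp add: trm_def ek ek')
    also have "\<dots> = - prd p e (Suc k)"
      using top prd_Suc[OF k1, of p e] ek by (simp add: algebra_simps flip: distrib_left)
    finally show ?case by (simp add: k_def)
  qed
  have l1: "(\<lambda>t. S e (t + Suc b) - S e' (t + Suc b)) \<longlonglongrightarrow> (\<Sum>k. trm p e (Suc k)) - (\<Sum>k. trm p e' (Suc k))"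
    unfolding S_def
    by (intro tendsto_diff LIMSEQ_ignore_initial_segment summable_LIMSEQ se se')
  have l2: "(\<lambda>t. S e (t + Suc b) - S e' (t + Suc b)) \<longlonglongrightarrow> 0"
    unfolding key using tendsto_minus[OF LIMSEQ_ignore_initial_segment[OF lim, of "Suc b"]] by simp
  from LIMSEQ_unique[OF l1 l2] show ?thesis by simp
qed


lemma qstep:
  fixes m :: "nat \<Rightarrow> nat" and q :: "nat \<Rightarrow> nat \<Rightarrow> real"
  assumes q_pos: "\<And>n i. n \<ge> 1 \<Longrightarrow> i \<le> m n \<Longrightarrow> q i n > 0"
    and q_sum: "\<And>n. n \<ge> 1 \<Longrightarrow> (\<Sum>i\<le>m n. q i n) = 1"
    and ve: "\<And>n. n \<ge> 1 \<Longrightarrow> e n \<le> m n" and ve': "\<And>n. n \<ge> 1 \<Longrightarrow> e' n \<le> m n"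
    and se: "summable (\<lambda>k. trm q e (Suc k))" and se': "summable (\<lambda>k. trm q e' (Suc k))"
    and agree: "\<And>j. 1 \<le> j \<Longrightarrow> j \<le> b \<Longrightarrow> e j = e' j"
    and lt: "e (Suc b) < e' (Suc b)"
    and eq: "(\<Sum>k. trm q e (Suc k)) = (\<Sum>k. trm q e' (Suc k))"
  shows "e' (Suc b) = Suc (e (Suc b)) \<and> (\<forall>j. e (Suc (Suc b) + j) = m (Suc (Suc b) + j))
     \<and> (\<forall>j. e' (Suc (Suc b) + j) = 0)"
proof -
  define n where "n = Suc b"
  define c where "c = e n"
  define c' where "c' = e' n"
  define P where "P = prd q e n"
  have n1: "n \<ge> 1" by (simp add: n_def)
  have pre: "(\<Sum>k<b. trm q e (Suc k)) = (\<Sum>k<b. trm q e' (Suc k))"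
    by (rule prefix_agree) (use agree in auto)
  have R: "Tl q e b = Tl q e' b" unfolding Tl_def pre eq ..
  have PP: "prd q e' n = P" unfolding P_def n_def by (rule prd_agree[symmetric]) (use agree in auto)
  have Ppos: "P > 0" unfolding P_def by (rule prd_pos[OF q_pos q_sum ve se])
  have R1: "Tl q e b = cum q c n * P + Tl q e (Suc b)"
    using Tl_Suc[of q e b] by (simp add: trm_def c_def P_def n_def)
  have R1': "Tl q e' b = cum q c' n * P + Tl q e' (Suc b)"
    using Tl_Suc[of q e' b] PP by (simp add: trm_def c'_def n_def)
  have pS: "prd q e (Suc n) = P * q c n" using prd_Suc[OF n1, of q e] by (simp add: P_def c_def)
  have T1: "Tl q e (Suc b) \<le> P * q c n"
    using Tl_le[OF q_pos q_sum ve se, where b="Suc b"] pS by (simp add: n_def)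
  have T2: "0 \<le> Tl q e' (Suc b)" by (rule Tl_nonneg[OF q_pos q_sum ve' se'])
  have cc: "c < c'" "c' \<le> m n" using lt ve'[OF n1] by (simp_all add: c_def c'_def n_def)
  have cm: "cum q (Suc c) n \<le> cum q c' n" using cum_mono[where m=m and q=q and n=n and i="Suc c" and j=c', OF q_pos q_sum n1] cc by simp
  have "P * cum q (Suc c) n \<le> P * cum q c' n" using cm Ppos by simp
  then have all: "P * cum q (Suc c) n = P * cum q c' n" "Tl q e (Suc b) = P * q c n" "Tl q e' (Suc b) = 0"
    using R R1 R1' T1 T2 by (simp_all add: cum_Suc algebra_simps)
  have "cum q (Suc c) n = cum q c' n" using all(1) Ppos by simp
  then have c'c: "c' = Suc c"
    using cum_strict[where m=m and q=q and n=n and i=c and j=c', OF q_pos q_sum n1] cc by (cases "Suc c < c'") auto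
  have o: "\<forall>j. e (Suc (Suc b) + j) = m (Suc (Suc b) + j)"
    using one_all[OF q_pos q_sum ve se, where b="Suc b"] all(2) pS by (simp add: n_def)
  have z: "\<forall>j. e' (Suc (Suc b) + j) = 0"
    using zero_all[OF q_pos q_sum ve' se', where b="Suc b"] all(3) by simp
  show ?thesis using o z c'c by (simp add: c_def c'_def n_def)
qed


lemma final:
  fixes m :: "nat \<Rightarrow> nat" and q p :: "nat \<Rightarrow> nat \<Rightarrow> real"
  assumes q_pos: "\<And>n i. n \<ge> 1 \<Longrightarrow> i \<le> m n \<Longrightarrow> q i n > 0"
    and q_sum: "\<And>n. n \<ge> 1 \<Longrightarrow> (\<Sum>i\<le>m n. q i n) = 1"
    and p_sum: "\<And>n. n \<ge> 1 \<Longrightarrow> (\<Sum>i\<le>m n. p i n) = 1"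
    and ve: "\<And>n. n \<ge> 1 \<Longrightarrow> e n \<le> m n" and ve': "\<And>n. n \<ge> 1 \<Longrightarrow> e' n \<le> m n"
    and sq: "summable (\<lambda>k. trm q e (Suc k))" and sq': "summable (\<lambda>k. trm q e' (Suc k))"
    and sp: "summable (\<lambda>k. trm p e (Suc k))" and sp': "summable (\<lambda>k. trm p e' (Suc k))"
    and lp: "(\<lambda>N. prd p e (Suc N)) \<longlonglongrightarrow> 0" and lp': "(\<lambda>N. prd p e' (Suc N)) \<longlonglongrightarrow> 0"
    and eq: "(\<Sum>k. trm q e (Suc k)) = (\<Sum>k. trm q e' (Suc k))"
  shows "(\<Sum>k. trm p e (Suc k)) = (\<Sum>k. trm p e' (Suc k))"
proof (cases "\<forall>n\<ge>1. e n = e' n")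
  case True
  have "trm p e (Suc k) = trm p e' (Suc k)" for k
    by (rule trm_agree(1)) (use True in auto)
  then show ?thesis by simp
next
  case False
  define n where "n = (LEAST n. 1 \<le> n \<and> e n \<noteq> e' n)"
  have ex: "\<exists>n. 1 \<le> n \<and> e n \<noteq> e' n" using False by auto
  have n: "1 \<le> n" "e n \<noteq> e' n" using LeastI_ex[OF ex] unfolding n_def[symmetric] by auto
  have ag: "e j = e' j" if "1 \<le> j" "j < n" for j
    using not_less_Least[of j "\<lambda>n. 1 \<le> n \<and> e n \<noteq> e' n"] that unfolding n_def[symmetric] by auto
  obtain b where b: "n = Suc b" using n(1) by (cases n) auto
  have agb: "\<And>j. 1 \<le> j \<Longrightarrow> j \<le> b \<Longrightarrow> e j = e' j" using ag b by auto
  show ?thesis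
  proof (cases "e n < e' n")
    case True
    have st: "e' (Suc b) = Suc (e (Suc b)) \<and> (\<forall>j. e (Suc (Suc b) + j) = m (Suc (Suc b) + j))
       \<and> (\<forall>j. e' (Suc (Suc b) + j) = 0)"
      by (rule qstep[OF q_pos q_sum ve ve' sq sq' agb]) (use True b eq in auto)
    show ?thesis
      by (rule p_eq[OF p_sum sp sp' agb]) (use st lp in auto)
  next
    case False
    then have lt: "e' n < e n" using n(2) by simp
    have agb': "\<And>j. 1 \<le> j \<Longrightarrow> j \<le> b \<Longrightarrow> e' j = e j" using agb by metis
    have st: "e (Suc b) = Suc (e' (Suc b)) \<and> (\<forall>j. e' (Suc (Suc b) + j) = m (Suc (Suc b) + j))
       \<and> (\<forall>j. e (Suc (Suc b) + j) = 0)"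
      by (rule qstep[OF q_pos q_sum ve' ve sq' sq agb']) (use lt b eq in auto)
    have "(\<Sum>k. trm p e' (Suc k)) = (\<Sum>k. trm p e (Suc k))"
      by (rule p_eq[OF p_sum sp' sp agb']) (use st lp' in auto)
    then show ?thesis by simp
  qed
qed

definition etil :: "(nat \<Rightarrow> nat) \<Rightarrow> (nat \<Rightarrow> nat) \<Rightarrow> nat \<Rightarrow> nat" where
  "etil m d n = (if odd n then d n else m n - d n)"

lemma tld_etil: "tld m f (d n) n = f (etil m d n) n"
  by (simp add: tld_def etil_def)

lemma nega_term_trm: "nega_term m r d n = trm r (etil m d) n"
  unfolding nega_term_def trm_def prd_def tld_etil ..

lemma etil_valid: "valid_digits m d \<Longrightarrow> valid_digits m (etil m d)"
  unfolding valid_digits_def etil_def by auto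

lemma prd_lim_abs: assumes "(\<lambda>N. \<Prod>n\<in>{1..N}. \<bar>r (e n) n\<bar>) \<longlonglongrightarrow> 0"
  shows "(\<lambda>N. prd r e (Suc N)) \<longlonglongrightarrow> 0"
proof -
  have "(\<lambda>N. \<bar>prd r e (Suc N)\<bar>) = (\<lambda>N. \<Prod>n\<in>{1..N}. \<bar>r (e n) n\<bar>)"
    by (simp add: prd_def abs_prod atLeastLessThanSuc_atLeastAtMost)
  then show ?thesis using assms tendsto_rabs_zero_iff by metis
qed

lemma prd_lim: assumes "(\<lambda>N. \<Prod>n\<in>{1..N}. r (e n) n) \<longlonglongrightarrow> 0"
  shows "(\<lambda>N. prd r e (Suc N)) \<longlonglongrightarrow> 0"
  using assms by (simp add: prd_def atLeastLessThanSuc_atLeastAtMost)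

theorem mainTheorem1:
  fixes m :: "nat \<Rightarrow> nat" and q p :: "nat \<Rightarrow> nat \<Rightarrow> real"
  assumes q_pos: "\<And>n i. n \<ge> 1 \<Longrightarrow> i \<le> m n \<Longrightarrow> q i n > 0"
    and q_sum: "\<And>n. n \<ge> 1 \<Longrightarrow> (\<Sum>i\<le>m n. q i n) = 1"
    and q_prod: "\<And>d. valid_digits m d \<Longrightarrow> (\<lambda>N. \<Prod>n\<in>{1..N}. q (d n) n) \<longlonglongrightarrow> 0"
    and p_bound: "\<And>n i. n \<ge> 1 \<Longrightarrow> i \<le> m n \<Longrightarrow> -1 < p i n \<and> p i n < 1"
    and p_sum: "\<And>n. n \<ge> 1 \<Longrightarrow> (\<Sum>i\<le>m n. p i n) = 1"
    and p_prod: "\<And>d. valid_digits m d \<Longrightarrow> (\<lambda>N. \<Prod>n\<in>{1..N}. \<bar>p (d n) n\<bar>) \<longlonglongrightarrow> 0"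
    and p_partial: "\<And>n c. n \<ge> 1 \<Longrightarrow> 1 \<le> c \<Longrightarrow> c \<le> m n \<Longrightarrow>
                      0 < (\<Sum>i<c. p i n) \<and> (\<Sum>i<c. p i n) < 1"
  shows "(\<forall>d. valid_digits m d \<longrightarrow> summable (\<lambda>k. nega_term m p d (Suc k)))
       \<and> (\<forall>d d'. valid_digits m d \<longrightarrow> valid_digits m d' \<longrightarrow>
            nega_val m q d = nega_val m q d' \<longrightarrow>
            (\<Sum>k. nega_term m p d (Suc k)) = (\<Sum>k. nega_term m p d' (Suc k)))"
proof -
  have pc: "0 \<le> cum p c n \<and> cum p c n \<le> 1" if hn: "n \<ge> 1" and hc: "c \<le> Suc (m n)" for n c
  proof -
    consider "c = 0" | "1 \<le> c" "c \<le> m n" | "c = Suc (m n)" using hc by (cases "c = 0") (auto simp: le_Suc_eq)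
    then show ?thesis
    proof cases
      case 2 then show ?thesis using p_partial[OF hn 2] by (simp add: cum_def)
    next
      case 3 then show ?thesis using p_sum[OF hn] by (simp add: cum_def lessThan_Suc_atMost)
    qed simp
  qed
  have pb: "0 \<le> cum p i n \<and> cum p i n \<le> 1 \<and> 0 \<le> cum p i n + p i n \<and> cum p i n + p i n \<le> 1"
    if "n \<ge> 1" "i \<le> m n" for n i
    using pc[OF that(1), of i] pc[OF that(1), of "Suc i"] that(2) by (simp add: cum_Suc)
  have qb: "0 \<le> cum q i n \<and> cum q i n \<le> 1 \<and> 0 \<le> cum q i n + q i n \<and> cum q i n + q i n \<le> 1"
    if "n \<ge> 1" "i \<le> m n" for n i
    by (rule q_bnd[where m=m and q=q, OF q_pos q_sum that])
  have sumP: "summable (\<lambda>k. trm p e (Suc k))" and limP: "(\<lambda>N. prd p e (Suc N)) \<longlonglongrightarrow> 0"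
    if "valid_digits m e" for e
  proof -
    show l: "(\<lambda>N. prd p e (Suc N)) \<longlonglongrightarrow> 0" by (rule prd_lim_abs[where r=p and e=e, OF p_prod[OF that]])
    show "summable (\<lambda>k. trm p e (Suc k))"
      by (rule lemB[OF _ l]) (use pb that in \<open>auto simp: valid_digits_def\<close>)
  qed
  have sumQ: "summable (\<lambda>k. trm q e (Suc k))" if "valid_digits m e" for e
    by (rule lemB[OF _ prd_lim[where r=q and e=e, OF q_prod[OF that]]]) (use qb that in \<open>auto simp: valid_digits_def\<close>)
  show ?thesis
  proof (intro conjI allI impI)
    fix d assume "valid_digits m d"
    then show "summable (\<lambda>k. nega_term m p d (Suc k))"
      unfolding nega_term_trm using sumP etil_valid by blast
  next
    fix d d' assume v: "valid_digits m d" "valid_digits m d'" and eq: "nega_val m q d = nega_val m q d'"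
    have v': "valid_digits m (etil m d)" "valid_digits m (etil m d')" using v etil_valid by auto
    show "(\<Sum>k. nega_term m p d (Suc k)) = (\<Sum>k. nega_term m p d' (Suc k))"
      unfolding nega_term_trm
      by (rule final[OF q_pos q_sum p_sum _ _ sumQ[OF v'(1)] sumQ[OF v'(2)] sumP(1)[OF v'(1)]
            sumP(1)[OF v'(2)] limP[OF v'(1)] limP[OF v'(2)]])
        (use v' eq in \<open>auto simp: valid_digits_def nega_val_def nega_term_trm\<close>)
  qed
qed

end
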